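(* Let $s$ be a positive integer, let $0<\varepsilon<1$, and let $A,B\subseteq[s]$. Put $\alpha=|B|/s$. Then there exist at least \[ \frac{\varepsilon}{1-(1-\varepsilon)\alpha}\,\alpha s \] elements $x\in[s]$ such that $|(A+x)\cap B|\ge(1-\varepsilon)\alpha|A|$.
   Context: $[s]=\{1,\dots,s\}$. For $A\subseteq[s]$ and an integer $x$, $A+x$ denotes the cyclic shift of $A$ within $[s]$ by $x$, i.e. $A+x=\{((a-1+x)\bmod s)+1 : a\in A\}$. *)

theory Defs
  imports Main Complex_Main
begin

definition cshift :: "nat \<Rightarrow> int set \<Rightarrow> int \<Rightarrow> int set" where
  "cshift s A x = (\<lambda>a. ((a - 1 + x) mod int s) + 1) ` A"

end

theory Submission
  imports Defs
begin

lemma shift_inj: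
  assumes "s > 0"
  shows "inj_on (\<lambda>x::int. ((c + x) mod int s) + 1) {1..int s}"
proof (rule inj_onI)
  fix x y assume x: "x \<in> {1..int s}" and y: "y \<in> {1..int s}"
    and e: "(c + x) mod int s + 1 = (c + y) mod int s + 1"
  then have "(c + x) mod int s = (c + y) mod int s" by simp
  then have "int s dvd (c + x) - (c + y)" by (simp add: mod_eq_dvd_iff)
  then have d: "int s dvd x - y" by simp
  have "\<bar>x - y\<bar> < int s" using x y by auto
  with d show "x = y"
    by (metis abs_of_nat dvd_imp_le_int eq_iff_diff_eq_0 not_le)
qed

lemma shift_img:
  assumes "s > 0"
  shows "(\<lambda>x::int. ((c + x) mod int s) + 1) ` {1..int s} = {1..int s}"
proof -
  have sub: "(\<lambda>x::int. ((c + x) mod int s) + 1) ` {1..int s} \<subseteq> {1..int s}"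
  proof
    fix y assume "y \<in> (\<lambda>x::int. ((c + x) mod int s) + 1) ` {1..int s}"
    then obtain x where "y = ((c + x) mod int s) + 1" by auto
    moreover have "(c + x) mod int s < int s" "(c + x) mod int s \<ge> 0" using assms by simp_all
    ultimately show "y \<in> {1..int s}" by simp
  qed
  have "card ((\<lambda>x::int. ((c + x) mod int s) + 1) ` {1..int s}) = card {1..int s}"
    using card_image[OF shift_inj[OF assms]] by simp
  then show ?thesis using card_subset_eq[OF _ sub] by simp
qed

lemma card_pre:
  assumes "inj_on f S"
  shows "card {x\<in>S. f x \<in> B} = card (f ` S \<inter> B)"
proof -
  have "f ` {x\<in>S. f x \<in> B} = f ` S \<inter> B" by auto
  moreover have "inj_on f {x\<in>S. f x \<in> B}" using assms by (rule inj_on_subset) auto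
  ultimately show ?thesis by (metis card_image)
qed

lemma sum_count:
  assumes "s > 0" "A \<subseteq> {1..int s}" "B \<subseteq> {1..int s}"
  shows "(\<Sum>x\<in>{1..int s}. card (cshift s A x \<inter> B)) = card A * card B"
proof -
  define f where "f a x = ((a - 1 + x) mod int s) + 1" for a x
  have finA: "finite A" using assms(2) finite_subset by blast
  have c1: "card (cshift s A x \<inter> B) = (\<Sum>a\<in>A. if f a x \<in> B then 1 else 0)" for x
  proof -
    have inj: "inj_on (\<lambda>a. f a x) A"
    proof -
      have "inj_on (\<lambda>a. ((x - 1 + a) mod int s) + 1) {1..int s}" by (rule shift_inj[OF assms(1)])
      then have "inj_on (\<lambda>a. f a x) {1..int s}" unfolding f_def
        by (simp add: algebra_simps)
      then show ?thesis using assms(2) inj_on_subset by blast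
    qed
    have "cshift s A x = (\<lambda>a. f a x) ` A" unfolding cshift_def f_def by simp
    then have "card (cshift s A x \<inter> B) = card {a\<in>A. f a x \<in> B}"
      using card_pre[OF inj] by simp
    also have "\<dots> = (\<Sum>a\<in>A. if f a x \<in> B then 1 else 0)"
      using finA by (simp add: sum.If_cases Int_def)
    finally show ?thesis .
  qed
  have c2: "(\<Sum>x\<in>{1..int s}. (if f a x \<in> B then 1 else 0)) = card B" if "a \<in> A" for a
  proof -
    have inj: "inj_on (f a) {1..int s}" unfolding f_def by (rule shift_inj[OF assms(1)])
    have img: "f a ` {1..int s} = {1..int s}" unfolding f_def by (rule shift_img[OF assms(1)])
    have "(\<Sum>x\<in>{1..int s}. (if f a x \<in> B then 1 else 0)) = card {x\<in>{1..int s}. f a x \<in> B}"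
      by (simp add: sum.If_cases Int_def)
    also have "\<dots> = card (f a ` {1..int s} \<inter> B)" by (rule card_pre[OF inj])
    also have "\<dots> = card B" using img assms(3) by (simp add: Int_absorb1)
    finally show ?thesis .
  qed
  have "(\<Sum>x\<in>{1..int s}. card (cshift s A x \<inter> B))
      = (\<Sum>x\<in>{1..int s}. \<Sum>a\<in>A. (if f a x \<in> B then 1 else 0))" using c1 by simp
  also have "\<dots> = (\<Sum>a\<in>A. \<Sum>x\<in>{1..int s}. (if f a x \<in> B then 1 else 0))"
    by (rule sum.swap)
  also have "\<dots> = (\<Sum>a\<in>A. card B)" using c2 by simp
  finally show ?thesis by simp
qed

theorem proposition1:
  fixes s :: nat and \<epsilon> :: real and A B :: "int set"
  assumes "s > 0" and "0 < \<epsilon>" and "\<epsilon> < 1"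
    and "A \<subseteq> {1..int s}" and "B \<subseteq> {1..int s}"
  defines "\<alpha> \<equiv> real (card B) / real s"
  shows "real (card {x \<in> {1..int s}. real (card (cshift s A x \<inter> B)) \<ge> (1 - \<epsilon>) * \<alpha> * real (card A)})
           \<ge> \<epsilon> / (1 - (1 - \<epsilon>) * \<alpha>) * \<alpha> * real s"
proof -
  define S where "S = {1..int s}"
  define t where "t = (1 - \<epsilon>) * \<alpha> * real (card A)"
  define c where "c x = real (card (cshift s A x \<inter> B))" for x
  define G where "G = {x \<in> S. c x \<ge> t}"
  define g where "g = real (card G)"
  have finS: "finite S" unfolding S_def by simp
  have cardS: "card S = s" unfolding S_def by simp
  have GS: "G \<subseteq> S" unfolding G_def by auto
  have cardB: "card B \<le> s" using card_mono[OF _ assms(5)] by simp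
  have a0: "\<alpha> \<ge> 0" unfolding \<alpha>_def by simp
  have a1: "\<alpha> \<le> 1" unfolding \<alpha>_def using cardB assms(1) by simp
  have aS: "\<alpha> * real s = real (card B)" unfolding \<alpha>_def using assms(1) by simp
  have den: "1 - (1 - \<epsilon>) * \<alpha> > 0"
  proof -
    have "(1 - \<epsilon>) * \<alpha> \<le> (1 - \<epsilon>) * 1" using a1 assms(3) by (intro mult_left_mono) auto
    then show ?thesis using assms(2) by simp
  qed
  have gs: "g \<le> real s" unfolding g_def using card_mono[OF finS GS] cardS by simp
  have key: "g * (1 - (1 - \<epsilon>) * \<alpha>) \<ge> \<epsilon> * \<alpha> * real s"
  proof (cases "card A = 0")
    case True
    then have "G = S" unfolding G_def t_def c_def by auto
    then have "g = real s" unfolding g_def using cardS by simp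
    then show ?thesis using a1 assms(1)
      by (simp add: algebra_simps mult_left_le)
  next
    case False
    define n where "n = real (card A)"
    have n0: "n > 0" using False n_def by simp
    have cn: "c x \<le> n" for x
    proof -
      have "card (cshift s A x \<inter> B) \<le> card (cshift s A x)"
        by (rule card_mono) (auto simp: cshift_def intro: finite_subset[OF assms(4)])
      also have "\<dots> \<le> card A" unfolding cshift_def by (rule card_image_le) (rule finite_subset[OF assms(4)], simp)
      finally show ?thesis unfolding c_def n_def by simp
    qed
    have tot: "(\<Sum>x\<in>S. c x) = n * real (card B)"
      using sum_count[OF assms(1) assms(4) assms(5)] unfolding c_def n_def S_def
      by (metis of_nat_mult of_nat_sum)
    have split: "(\<Sum>x\<in>S. c x) = (\<Sum>x\<in>G. c x) + (\<Sum>x\<in>S - G. c x)"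
      using finS GS by (metis sum.subset_diff add.commute)
    have s1: "(\<Sum>x\<in>G. c x) \<le> g * n"
      using sum_mono[of G c "\<lambda>_. n"] cn unfolding g_def by simp
    have s2: "(\<Sum>x\<in>S - G. c x) \<le> (real s - g) * t"
    proof -
      have "(\<Sum>x\<in>S - G. c x) \<le> (\<Sum>x\<in>S - G. t)"
        by (rule sum_mono) (auto simp: G_def)
      also have "\<dots> = real (card (S - G)) * t" by simp
      also have "real (card (S - G)) = real s - g"
        using card_Diff_subset[OF finite_subset[OF GS finS] GS] card_mono[OF finS GS] cardS
        unfolding g_def by simp
      finally show ?thesis .
    qed
    have "n * (\<alpha> * real s) \<le> g * n + (real s - g) * ((1 - \<epsilon>) * \<alpha> * n)"
      using tot split s1 s2 aS unfolding t_def n_def by simp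
    then have "n * (\<alpha> * real s) \<le> n * (g + (real s - g) * ((1 - \<epsilon>) * \<alpha>))"
      by (simp add: algebra_simps)
    then have "\<alpha> * real s \<le> g + (real s - g) * ((1 - \<epsilon>) * \<alpha>)"
      using n0 by simp
    then show ?thesis by (simp add: algebra_simps)
  qed
  have "\<epsilon> / (1 - (1 - \<epsilon>) * \<alpha>) * \<alpha> * real s = (\<epsilon> * \<alpha> * real s) / (1 - (1 - \<epsilon>) * \<alpha>)"
    by simp
  also have "\<dots> \<le> g" using key den by (simp add: divide_le_eq)
  finally show ?thesis unfolding g_def G_def S_def c_def t_def by simp
qed

end
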